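(* In any execution of temporal BFS on a temporal graph $G=(V,E)$ from source $s$ with starting time $t_s$, at every moment the queue $Q$ contains at most two records whose vertex is any given $v\in V$.
   Context: A temporal graph is a pair $G=(V,E)$ where $V$ is a finite set of vertices and $E$ is a finite set of temporal edges, i.e. triples $(u,v,t)$ with $u,v\in V$, $u\neq v$, $t\in\mathbb{R}$ (the time at which the edge is active); distinct elements of $E$ are distinct triples. Fix $t_s\in\mathbb{R}$ and $s\in V$. Temporal BFS. Records are tuples $(x,d,\tau,p)$ (vertex $x$, level $d$, time $\tau$, predecessor record $p$ or none); every record ever created is an occurrence (node) of the BFS tree $T$, rooted at the initial record, with a tree edge from the predecessor record to the record; the level and time of an occurrence are the final values of its fields. For each $x\in V$ a current value $\sigma(x)$ is kept, initially $\infty$, and set to $\tau$ whenever a record of $x$ is created or its time is updated to $\tau$. Initially the FIFO queue $Q$ contains only $(s,0,t_s,\text{none})$ and $\sigma(s)=t_s$; no edge is traversed. While $Q\neq\emptyset$: pop the front record $R=(u,d_u,\sigma_u,p_u)$; let $B$ be the set of edges $(u,v,t)\in E$ not yet traversed with $\sigma_u\le t$; for each vertex $v$ such that $B$ contains an edge to $v$ (in any order), let $e=(u,v,t)$ be the edge of $B$ to $v$ with smallest $t$, mark $e$ traversed, and: (i) if $Q$ contains no record of $v$ and $\sigma(v)>t$, create $(v,d_u+1,t,R)$ and append it to $Q$; (ii) if $Q$ contains a record of $v$ with level $d_u+1$ and $\sigma(v)>t$, set that record's time to $t$ and predecessor to $R$; (iii) if $Q$ contains a record of $v$ but none with level $d_u+1$,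 and $\sigma(v)>t$, create $(v,d_u+1,t,R)$ and append it to $Q$. *)

theory Defs
  imports Main "HOL-Library.Extended_Real"
begin

type_synonym 'v tedge = "'v \<times> 'v \<times> real"

definition temporal_graph :: "'v set \<Rightarrow> 'v tedge set \<Rightarrow> bool" where
  "temporal_graph V E \<longleftrightarrow> finite V \<and> finite E \<and>
     (\<forall>(u,v,t)\<in>E. u \<in> V \<and> v \<in> V \<and> u \<noteq> v)"

text \<open>BFS records (x, d, tau, p). Each record carries a unique identifier so that
  the predecessor field can refer to a record (a node of the BFS tree).\<close>
datatype 'v brec = BRec (rid: nat) (rvx: 'v) (rlev: nat) (rtime: real) (rpred: "nat option")

text \<open>Algorithm state: queue, current values sigma (\<infinity> = not yet set), traversed edges,
  fresh identifier counter, and the record currently being processed together with the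
  part of its edge set B whose target vertices have not yet been handled.\<close>
record 'v bstate =
  queue :: "'v brec list"
  sig :: "'v \<Rightarrow> ereal"
  trav :: "'v tedge set"
  nxt :: nat
  cur :: "('v brec \<times> 'v tedge set) option"

definition bfs_init :: "'v \<Rightarrow> real \<Rightarrow> 'v bstate" where
  "bfs_init s ts = \<lparr> queue = [BRec 0 s 0 ts None],
                     sig = (\<lambda>_. \<infinity>)(s := ereal ts),
                     trav = {}, nxt = 1, cur = None \<rparr>"

text \<open>Small steps of temporal BFS. Every state between two steps is a "moment".\<close>
inductive bfs_step :: "'v tedge set \<Rightarrow> 'v bstate \<Rightarrow> 'v bstate \<Rightarrow> bool" for E where
  pop: "cur st = None \<Longrightarrow> queue st = R # rest \<Longrightarrow>
        B = {(a,b,t) \<in> E. (a,b,t) \<notin> trav st \<and> a = rvx R \<and> rtime R \<le> t} \<Longrightarrow>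
        bfs_step E st (st\<lparr> queue := rest, cur := Some (R, B) \<rparr>)"
| finish: "cur st = Some (R, {}) \<Longrightarrow> bfs_step E st (st\<lparr> cur := None \<rparr>)"
| new_i: "cur st = Some (R, B) \<Longrightarrow> (u,v,t) \<in> B \<Longrightarrow>
        (\<forall>(a,b,t')\<in>B. b = v \<longrightarrow> t \<le> t') \<Longrightarrow>
        (\<forall>r\<in>set (queue st). rvx r \<noteq> v) \<Longrightarrow> sig st v > ereal t \<Longrightarrow>
        bfs_step E st (st\<lparr> queue := queue st @ [BRec (nxt st) v (Suc (rlev R)) t (Some (rid R))],
                         sig := (sig st)(v := ereal t),
                         trav := insert (u,v,t) (trav st),
                         nxt := Suc (nxt st),
                         cur := Some (R, {(a,b,t')\<in>B. b \<noteq> v}) \<rparr>)"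
| update_ii: "cur st = Some (R, B) \<Longrightarrow> (u,v,t) \<in> B \<Longrightarrow>
        (\<forall>(a,b,t')\<in>B. b = v \<longrightarrow> t \<le> t') \<Longrightarrow>
        i < length (queue st) \<Longrightarrow> rvx (queue st ! i) = v \<Longrightarrow>
        rlev (queue st ! i) = Suc (rlev R) \<Longrightarrow> sig st v > ereal t \<Longrightarrow>
        bfs_step E st (st\<lparr> queue := (queue st)[i := BRec (rid (queue st ! i)) v (Suc (rlev R)) t (Some (rid R))],
                         sig := (sig st)(v := ereal t),
                         trav := insert (u,v,t) (trav st),
                         cur := Some (R, {(a,b,t')\<in>B. b \<noteq> v}) \<rparr>)"
| new_iii: "cur st = Some (R, B) \<Longrightarrow> (u,v,t) \<in> B \<Longrightarrow>
        (\<forall>(a,b,t')\<in>B. b = v \<longrightarrow> t \<le> t') \<Longrightarrow>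
        (\<exists>r\<in>set (queue st). rvx r = v) \<Longrightarrow>
        (\<forall>r\<in>set (queue st). rvx r = v \<longrightarrow> rlev r \<noteq> Suc (rlev R)) \<Longrightarrow>
        sig st v > ereal t \<Longrightarrow>
        bfs_step E st (st\<lparr> queue := queue st @ [BRec (nxt st) v (Suc (rlev R)) t (Some (rid R))],
                         sig := (sig st)(v := ereal t),
                         trav := insert (u,v,t) (trav st),
                         nxt := Suc (nxt st),
                         cur := Some (R, {(a,b,t')\<in>B. b \<noteq> v}) \<rparr>)"
| skip: "cur st = Some (R, B) \<Longrightarrow> (u,v,t) \<in> B \<Longrightarrow>
        (\<forall>(a,b,t')\<in>B. b = v \<longrightarrow> t \<le> t') \<Longrightarrow>
        \<not> sig st v > ereal t \<Longrightarrow>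
        bfs_step E st (st\<lparr> trav := insert (u,v,t) (trav st),
                         cur := Some (R, {(a,b,t')\<in>B. b \<noteq> v}) \<rparr>)"

end

theory Submission
  imports Defs
begin

definition binv :: "'v bstate \<Rightarrow> bool" where
  "binv st \<longleftrightarrow> sorted (map rlev (queue st)) \<and> distinct (map (\<lambda>r. (rvx r, rlev r)) (queue st)) \<and>
     (case cur st of None \<Rightarrow> (\<forall>r\<in>set (queue st). \<forall>r'\<in>set (queue st). rlev r' \<le> Suc (rlev r))
      | Some (R,B) \<Rightarrow> (\<forall>r\<in>set (queue st). rlev R \<le> rlev r \<and> rlev r \<le> Suc (rlev R)))"

lemma binv_init: "binv (bfs_init s ts)"
  by (simp add: binv_def bfs_init_def)

lemma upd_same:
  assumes "i < length xs" "f x = f (xs ! i)"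
  shows "map f (xs[i := x]) = map f xs"
  using assms by (simp add: map_update list_update_id[symmetric]) (metis list_update_id map_update nth_map)

lemma binv_step:
  assumes "bfs_step E st st'" "binv st"
  shows "binv st'"
  using assms
proof cases
  case (pop R rest B)
  then show ?thesis using assms(2) by (auto simp: binv_def)
next
  case (finish R)
  then have "\<forall>r\<in>set (queue st). rlev R \<le> rlev r \<and> rlev r \<le> Suc (rlev R)"
    using assms(2) by (auto simp: binv_def)
  then have "\<forall>r\<in>set (queue st). \<forall>r'\<in>set (queue st). rlev r' \<le> Suc (rlev r)"
    by (meson le_trans Suc_le_mono)
  then show ?thesis using finish assms(2) by (simp add: binv_def)
next
  case (new_i R B u v t)
  then show ?thesis using assms(2)
    by (auto simp: binv_def sorted_append)
next
  case (update_ii R B u v t i)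
  let ?x = "BRec (rid (queue st ! i)) v (Suc (rlev R)) t (Some (rid R))"
  have m1: "map rlev ((queue st)[i := ?x]) = map rlev (queue st)"
    using update_ii by (intro upd_same) auto
  have m2: "map (\<lambda>r. (rvx r, rlev r)) ((queue st)[i := ?x]) = map (\<lambda>r. (rvx r, rlev r)) (queue st)"
    using update_ii by (intro upd_same) auto
  have s: "set ((queue st)[i := ?x]) \<subseteq> insert ?x (set (queue st))"
    by (rule set_update_subset_insert)
  have "rlev R \<le> rlev r \<and> rlev r \<le> Suc (rlev R)" if "r \<in> set ((queue st)[i := ?x])" for r
    using that s assms(2) update_ii by (auto simp: binv_def)
  then show ?thesis using assms(2) update_ii m1 m2 by (auto simp: binv_def)
next
  case (new_iii R B u v t)
  then show ?thesis using assms(2)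
    by (auto simp: binv_def sorted_append)
next
  case (skip R B u v t)
  then show ?thesis using assms(2) by (auto simp: binv_def)
qed

lemma binv_reach: "(bfs_step E)\<^sup>*\<^sup>* a b \<Longrightarrow> binv a \<Longrightarrow> binv b"
  by (induction rule: rtranclp_induct) (auto intro: binv_step)

lemma binv_levels:
  assumes "binv st"
  shows "\<exists>d. \<forall>r\<in>set (queue st). rlev r = d \<or> rlev r = Suc d"
proof (cases "cur st")
  case None
  show ?thesis
  proof (cases "queue st")
    case Nil then show ?thesis by simp
  next
    case (Cons R rest)
    have "\<forall>r\<in>set (queue st). rlev R \<le> rlev r \<and> rlev r \<le> Suc (rlev R)"
      using assms None Cons by (auto simp: binv_def)
    then show ?thesis by (metis le_SucE le_antisym)
  qed
next
  case (Some p)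
  then obtain R B where "cur st = Some (R, B)" by (cases p) auto
  then have "\<forall>r\<in>set (queue st). rlev R \<le> rlev r \<and> rlev r \<le> Suc (rlev R)"
    using assms by (auto simp: binv_def)
  then show ?thesis by (metis le_SucE le_antisym)
qed

theorem lemma15:
  fixes V :: "'v set" and E :: "'v tedge set" and s :: 'v and ts :: real
  assumes "temporal_graph V E" and "s \<in> V"
    and "(bfs_step E)\<^sup>*\<^sup>* (bfs_init s ts) st"
    and "v \<in> V"
  shows "length (filter (\<lambda>r. rvx r = v) (queue st)) \<le> 2"
proof -
  have I: "binv st" using binv_reach[OF assms(3) binv_init] .
  obtain d where d: "\<forall>r\<in>set (queue st). rlev r = d \<or> rlev r = Suc d"
    using binv_levels[OF I] by blast
  let ?f = "\<lambda>r. (rvx r, rlev r)"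
  let ?l = "filter (\<lambda>r. rvx r = v) (queue st)"
  have dist: "distinct (map ?f ?l)"
    using I by (auto simp: binv_def distinct_map_filter)
  have sub: "set (map ?f ?l) \<subseteq> {(v,d), (v, Suc d)}"
    using d by auto
  have "length ?l = card (set (map ?f ?l))"
    using distinct_card[OF dist] by simp
  also have "\<dots> \<le> card {(v,d), (v, Suc d)}"
    by (rule card_mono[OF _ sub]) simp
  also have "\<dots> \<le> 2" by (simp add: card_insert_if)
  finally show ?thesis .
qed

end
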